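(* Let $n,d$ be integers, $0<\alpha<1$, and $d_1=\lceil 1000\log n/\alpha^2\rceil$. Then $T(n,d,\alpha)\le T(n,d_1,\alpha/2)$, where $T(n,d,\alpha)$ denotes the VC dimension of the $(1+\alpha)$-separate contrastive learning problem for $\ell_2$-distances in dimension $d$ on a dataset of size $n$.
   Context: $V$ is a finite set with $|V|=n$. A query is a triple $(u,v,w)$ of elements of $V$, labeled either $(u,v^+,w^-)$ or $(u,w^+,v^-)$. In the $(1+\alpha)$-separate problem for $\ell_2$ in dimension $d$, an embedding $f:V\to\mathbb R^d$ satisfies the labeled query $(u,v^+,w^-)$ if $(1+\alpha)\|f(u)-f(v)\|_2<\|f(u)-f(w)\|_2$ (symmetrically for $(u,w^+,v^-)$). A set $Q$ of queries is shattered if for every labeling of $Q$ there exists $f:V\to\mathbb R^d$ satisfying all labeled queries; $T(n,d,\alpha)$ is the maximum size of a shattered set. *)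

theory Defs
  imports Complex_Main
begin

text \<open>Euclidean (l2) distance in R^d, points represented as functions nat => real
  of which only the coordinates i < d are relevant.\<close>
definition l2dist :: "nat \<Rightarrow> (nat \<Rightarrow> real) \<Rightarrow> (nat \<Rightarrow> real) \<Rightarrow> real" where
  "l2dist d x y = sqrt (\<Sum>i<d. (x i - y i)^2)"

text \<open>A query is a triple (u,v,w). A label b = True means (u, v^+, w^-),
  b = False means (u, w^+, v^-).\<close>
definition satisfies :: "nat \<Rightarrow> real \<Rightarrow> ('a \<Rightarrow> nat \<Rightarrow> real) \<Rightarrow> 'a \<times> 'a \<times> 'a \<Rightarrow> bool \<Rightarrow> bool" where
  "satisfies d \<alpha> f q b = (case q of (u, v, w) \<Rightarrow>
     (if b then (1 + \<alpha>) * l2dist d (f u) (f v) < l2dist d (f u) (f w)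
           else (1 + \<alpha>) * l2dist d (f u) (f w) < l2dist d (f u) (f v)))"

definition shattered :: "nat \<Rightarrow> real \<Rightarrow> 'a set \<Rightarrow> ('a \<times> 'a \<times> 'a) set \<Rightarrow> bool" where
  "shattered d \<alpha> V Q \<longleftrightarrow> Q \<subseteq> V \<times> V \<times> V \<and>
     (\<forall>L :: 'a \<times> 'a \<times> 'a \<Rightarrow> bool. \<exists>f :: 'a \<Rightarrow> nat \<Rightarrow> real.
        \<forall>q\<in>Q. satisfies d \<alpha> f q (L q))"

text \<open>T(n,d,alpha): maximum size of a shattered set of queries on a ground set of size n
  (we take V = {0..<n}; the value only depends on |V|).\<close>
definition T :: "nat \<Rightarrow> nat \<Rightarrow> real \<Rightarrow> nat" where
  "T n d \<alpha> = Max {card Q | Q. shattered d \<alpha> {0..<n} Q}"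

end

theory Submission
  imports Defs "HOL-Probability.Probability"
begin


lemma cosh_bound: "exp x + exp (- x) \<le> 2 * exp (x^2 / 2)" for x :: real
proof -
  have key: "exp y + exp (- y) \<le> 2 * exp (y^2 / 2)" if "y \<ge> 0" for y :: real
  proof -
    have "-(2*y) * (1/2) + ln (1 + (1/2) * (exp (2*y) - 1)) \<le> (2*y)^2 / 8"
      using Hoeffdings_lemma_aux[of "2*y" "1/2"] that by simp
    hence "ln ((1 + exp (2*y)) / 2) \<le> y + y^2/2"
      by (simp add: power2_eq_square field_simps)
    hence "exp (ln ((1 + exp (2*y)) / 2)) \<le> exp (y + y^2/2)" by simp
    hence "(1 + exp (2*y)) / 2 \<le> exp (y + y^2/2)"
      by (simp add: add_pos_pos)
    also have "exp (y + y^2/2) = exp y * exp (y^2/2)" by (simp add: exp_add)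
    finally have "(1 + exp (2*y)) \<le> 2 * exp y * exp (y^2/2)" by simp
    moreover have "exp (2*y) = exp y * exp y" by (simp add: exp_add[symmetric])
    ultimately have "exp (-y) * (1 + exp y * exp y) \<le> exp (-y) * (2 * exp y * exp (y^2/2))"
      by (intro mult_left_mono) auto
    thus ?thesis by (simp add: algebra_simps exp_minus field_simps)
  qed
  show ?thesis
  proof (cases "x \<ge> 0")
    case True thus ?thesis using key by blast
  next
    case False thus ?thesis using key[of "-x"] by simp
  qed
qed

lemma exp_lower2: "0 \<le> x \<Longrightarrow> 1 + x + x^2/2 \<le> exp x" for x :: real
proof -
  assume x: "0 \<le> x"
  have d: "\<And>t. ((\<lambda>t. exp t - 1 - t - t^2/2) has_real_derivative (exp t - 1 - t)) (at t)"
    by (auto intro!: derivative_eq_intros simp: power2_eq_square)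
  have "(\<lambda>t. exp t - 1 - t - t^2/2) 0 \<le> (\<lambda>t. exp t - 1 - t - t^2/2) x"
    apply (rule DERIV_nonneg_imp_nondecreasing[OF x])
    subgoal for y proof -
      have "1 + y \<le> exp y" by (rule exp_ge_add_one_self)
      hence "0 \<le> exp y - 1 - y" by linarith
      thus ?thesis using d[of y] by blast
    qed
    done
  thus ?thesis by simp
qed

lemma exp_neg_upper2: "0 \<le> x \<Longrightarrow> exp (-x) \<le> 1 - x + x^2/2" for x :: real
proof -
  assume x: "0 \<le> x"
  have d: "\<And>t. ((\<lambda>t. 1 - t + t^2/2 - exp (-t)) has_real_derivative (-1 + t + exp (-t))) (at t)"
    by (auto intro!: derivative_eq_intros simp: power2_eq_square)
  have "(\<lambda>t. 1 - t + t^2/2 - exp (-t)) 0 \<le> (\<lambda>t. 1 - t + t^2/2 - exp (-t)) x"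
    apply (rule DERIV_nonneg_imp_nondecreasing[OF x])
    subgoal for y using d[of y] exp_ge_add_one_self[of "-y"] by (intro exI[of _ "-1 + y + exp (-y)"]) auto
    done
  thus ?thesis by simp
qed

lemma gauss_lin:
  "(\<lambda>g. std_normal_density g * exp (c * g)) = (\<lambda>g. exp (c^2/2) * normal_density c 1 g)"
proof
  fix g
  have "- g\<^sup>2 / 2 + c * g = c^2/2 + (-(g - c)\<^sup>2 / 2)"
    by (simp add: power2_eq_square field_simps)
  hence "exp (- g\<^sup>2 / 2) * exp (c * g) = exp (c^2/2) * exp (-(g - c)\<^sup>2 / 2)"
    by (metis exp_add)
  thus "std_normal_density g * exp (c * g) = exp (c^2/2) * normal_density c 1 g"
    by (simp add: std_normal_density_def normal_density_def)
qed

lemma gauss_lin_int: "integrable lborel (\<lambda>g. std_normal_density g * exp (c * g))"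
  "(\<integral>g. std_normal_density g * exp (c * g) \<partial>lborel) = exp (c^2/2)"
  unfolding gauss_lin by auto

lemma gauss_sq:
  assumes "0 \<le> t" "t < 1/2"
  shows "(\<lambda>g. std_normal_density g * exp (t * g^2)) = (\<lambda>g. (1 / sqrt (1 - 2*t)) * normal_density 0 (1 / sqrt (1 - 2*t)) g)"
proof
  fix g
  have p: "0 < 1 - 2*t" using assms by simp
  have "exp (- g\<^sup>2 / 2) * exp (t * g^2) = exp (-(g^2) * (1 - 2*t) / 2)"
    by (simp add: exp_add[symmetric] algebra_simps)
  moreover have "sqrt (2 * pi * (1 / sqrt (1 - 2 * t))\<^sup>2) = sqrt (2*pi) / sqrt (1 - 2*t)"
    using p by (simp add: power_divide real_sqrt_divide)
  ultimately show "std_normal_density g * exp (t * g^2) = (1 / sqrt (1 - 2*t)) * normal_density 0 (1 / sqrt (1 - 2*t)) g"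
    using p by (simp add: std_normal_density_def normal_density_def power_divide field_simps)
qed

lemma gauss_sq_int:
  assumes "0 \<le> t" "t < 1/2"
  shows "integrable lborel (\<lambda>g. std_normal_density g * exp (t * g^2))"
    "(\<integral>g. std_normal_density g * exp (t * g^2) \<partial>lborel) = 1 / sqrt (1 - 2*t)"
  unfolding gauss_sq[OF assms] using assms by auto



definition Sg :: "nat \<Rightarrow> (nat \<Rightarrow> real) set" where
  "Sg d = PiE {..<d} (\<lambda>_. {-1, 1})"
definition dotp :: "nat \<Rightarrow> (nat \<Rightarrow> real) \<Rightarrow> (nat \<Rightarrow> real) \<Rightarrow> real" where
  "dotp d r z = (\<Sum>i<d. r i * z i)"
definition nrm :: "nat \<Rightarrow> (nat \<Rightarrow> real) \<Rightarrow> real" where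
  "nrm d z = (\<Sum>i<d. (z i)^2)"

lemma Sg_finite[simp]: "finite (Sg d)"
  unfolding Sg_def by (rule finite_PiE) auto

lemma Sg_card: "card (Sg d) = 2^d"
  unfolding Sg_def by (simp add: card_PiE numeral_2_eq_2)

lemma nrm_nonneg: "0 \<le> nrm d z"
  unfolding nrm_def by (simp add: sum_nonneg)

lemma Sg_sq: "r \<in> Sg d \<Longrightarrow> i < d \<Longrightarrow> r i * r i = 1"
proof -
  assume "r \<in> Sg d" "i < d"
  hence "r i \<in> {-1, 1}" unfolding Sg_def by (auto simp: PiE_iff)
  thus ?thesis by auto
qed

lemma sum_exp_lin:
  "(\<Sum>r\<in>Sg d. exp (c * dotp d r z)) \<le> 2^d * exp (c^2 * nrm d z / 2)"
proof -
  have "(\<Sum>r\<in>Sg d. exp (c * dotp d r z)) = (\<Sum>r\<in>Sg d. \<Prod>i<d. exp (c * r i * z i))"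
    unfolding dotp_def by (simp add: sum_distrib_left exp_sum mult.assoc)
  also have "\<dots> = (\<Prod>i<d. \<Sum>y\<in>{-1,1}. exp (c * y * z i))"
    unfolding Sg_def by (rule prod_sum_PiE[symmetric]) auto
  also have "\<dots> = (\<Prod>i<d. exp (c * z i) + exp (- (c * z i)))"
    by (simp add: add.commute)
  also have "\<dots> \<le> (\<Prod>i<d. 2 * exp ((c * z i)^2 / 2))"
    by (intro prod_mono conjI cosh_bound) (auto intro: add_nonneg_nonneg)
  also have "\<dots> = 2^d * exp (c^2 * nrm d z / 2)"
    by (simp add: prod.distrib exp_sum[symmetric] nrm_def sum_divide_distrib sum_distrib_left
        power_mult_distrib)
  finally show ?thesis .
qed

lemma sum_exp_sq:
  assumes "0 \<le> l" "2 * l * nrm d z < 1"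
  shows "(\<Sum>r\<in>Sg d. exp (l * (dotp d r z)^2)) \<le> 2^d / sqrt (1 - 2 * l * nrm d z)"
proof -
  define b where "b = sqrt (2 * l)"
  have b2: "b^2 = 2 * l" unfolding b_def using assms by simp
  define \<phi> where "\<phi> = std_normal_density"
  have e: "exp (l * (dotp d r z)^2) = (\<integral>g. \<phi> g * exp ((b * dotp d r z) * g) \<partial>lborel)" for r
    unfolding \<phi>_def gauss_lin_int by (simp add: power_mult_distrib b2)
  have int1: "integrable lborel (\<lambda>g. \<phi> g * exp ((b * dotp d r z) * g))" for r
    unfolding \<phi>_def by (rule gauss_lin_int)
  have t: "0 \<le> l * nrm d z" "l * nrm d z < 1/2" using assms nrm_nonneg[of d z] by auto
  have int2: "integrable lborel (\<lambda>g. \<phi> g * exp ((l * nrm d z) * g^2))"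
    unfolding \<phi>_def by (rule gauss_sq_int[OF t])
  have "(\<Sum>r\<in>Sg d. exp (l * (dotp d r z)^2)) = (\<integral>g. (\<Sum>r\<in>Sg d. \<phi> g * exp ((b * dotp d r z) * g)) \<partial>lborel)"
    unfolding e by (rule Bochner_Integration.integral_sum[symmetric]) (rule int1)
  also have "\<dots> \<le> (\<integral>g. 2^d * (\<phi> g * exp ((l * nrm d z) * g^2)) \<partial>lborel)"
  proof (rule integral_mono)
    show "integrable lborel (\<lambda>g. \<Sum>r\<in>Sg d. \<phi> g * exp (b * dotp d r z * g))"
      using int1 by auto
    show "integrable lborel (\<lambda>g. 2 ^ d * (\<phi> g * exp (l * nrm d z * g\<^sup>2)))"
      using int2 by auto
    fix g
    have "(\<Sum>r\<in>Sg d. \<phi> g * exp (b * dotp d r z * g)) = \<phi> g * (\<Sum>r\<in>Sg d. exp ((b * g) * dotp d r z))"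
      by (simp add: sum_distrib_left mult_ac)
    also have "\<dots> \<le> \<phi> g * (2^d * exp ((b * g)^2 * nrm d z / 2))"
      by (intro mult_left_mono sum_exp_lin) (auto simp: \<phi>_def)
    also have "\<dots> = 2^d * (\<phi> g * exp ((l * nrm d z) * g^2))"
      by (simp add: power_mult_distrib b2 mult_ac)
    finally show "(\<Sum>r\<in>Sg d. \<phi> g * exp (b * dotp d r z * g)) \<le> 2^d * (\<phi> g * exp ((l * nrm d z) * g^2))" .
  qed
  also have "\<dots> = 2^d / sqrt (1 - 2 * (l * nrm d z))"
    using gauss_sq_int(2)[OF t] unfolding \<phi>_def by simp
  finally show ?thesis by (simp add: mult.assoc)
qed

lemma Sg_flip:
  assumes "i < d" "j < d" "i \<noteq> j"
  shows "(\<Sum>r\<in>Sg d. r i * r j) = 0"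
proof -
  define fl where "fl = (\<lambda>r::nat\<Rightarrow>real. r(i := - r i))"
  have inv: "fl (fl r) = r" for r unfolding fl_def by auto
  have mem: "r \<in> Sg d \<Longrightarrow> fl r \<in> Sg d" for r
    unfolding fl_def Sg_def using assms by (auto simp: PiE_iff extensional_def)
  have bij: "bij_betw fl (Sg d) (Sg d)"
    by (rule bij_betw_byWitness[where f'=fl]) (auto simp: inv mem)
  have "(\<Sum>r\<in>Sg d. r i * r j) = (\<Sum>r\<in>Sg d. fl r i * fl r j)"
    using sum.reindex_bij_betw[OF bij, of "\<lambda>r. r i * r j"] by simp
  also have "\<dots> = - (\<Sum>r\<in>Sg d. r i * r j)"
    unfolding fl_def using assms by (simp add: sum_negf)
  finally show ?thesis by simp
qed

lemma sum_sq: "(\<Sum>r\<in>Sg d. (dotp d r z)^2) = 2^d * nrm d z"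
proof -
  have "(\<Sum>r\<in>Sg d. (dotp d r z)^2) = (\<Sum>r\<in>Sg d. \<Sum>i<d. \<Sum>j<d. (r i * r j) * (z i * z j))"
    unfolding dotp_def power2_eq_square by (simp add: sum_product mult_ac)
  also have "\<dots> = (\<Sum>i<d. \<Sum>j<d. (\<Sum>r\<in>Sg d. r i * r j) * (z i * z j))"
    by (simp add: sum.swap[of _ "Sg d"] sum_distrib_right)
  also have "\<dots> = (\<Sum>i<d. \<Sum>j<d. (if i = j then 2^d * (z i * z j) else 0))"
    by (intro sum.cong refl) (auto simp: Sg_flip Sg_sq Sg_card)
  also have "\<dots> = 2^d * nrm d z"
    by (simp add: nrm_def sum_distrib_left power2_eq_square)
  finally show ?thesis .
qed

lemma sum_4:
  assumes "0 < nrm d z"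
  shows "(\<Sum>r\<in>Sg d. (dotp d r z)^4) \<le> 2^d * (16/5) * (nrm d z)^2"
proof -
  define N where "N = nrm d z"
  define \<mu> where "\<mu> = 1 / (100 * N)"
  have N: "0 < N" using assms N_def by simp
  have mu: "0 \<le> \<mu>" "2 * \<mu> * N = 1/50" using N by (auto simp: \<mu>_def)
  have "(\<Sum>r\<in>Sg d. 1 + \<mu> * (dotp d r z)^2 + (\<mu> * (dotp d r z)^2)^2/2) \<le> (\<Sum>r\<in>Sg d. exp (\<mu> * (dotp d r z)^2))"
    by (intro sum_mono exp_lower2) (use mu in auto)
  also have "\<dots> \<le> 2^d / sqrt (1 - 2 * \<mu> * N)"
    using sum_exp_sq[of \<mu> d z] mu N_def by auto
  also have "\<dots> = 2^d / sqrt (49/50)"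
    using mu by simp
  also have "\<dots> = 2^d * sqrt (50/49)"
    by (simp add: real_sqrt_divide)
  also have "\<dots> \<le> 2^d * (101016/100000)"
  proof -
    have "sqrt (50/49) \<le> sqrt ((101016/100000)^2::real)"
      by (subst real_sqrt_le_iff) (simp add: power2_eq_square)
    thus ?thesis by simp
  qed
  finally have "(\<Sum>r\<in>Sg d. 1 + \<mu> * (dotp d r z)^2 + (\<mu> * (dotp d r z)^2)^2/2) \<le> 2^d * (101016/100000)" .
  moreover have "(\<Sum>r\<in>Sg d. 1 + \<mu> * (dotp d r z)^2 + (\<mu> * (dotp d r z)^2)^2/2)
      = 2^d + \<mu> * (2^d * N) + \<mu>^2/2 * (\<Sum>r\<in>Sg d. (dotp d r z)^4)"
    by (simp add: sum.distrib sum_distrib_left[symmetric] sum_sq Sg_card N_def power_mult_distrib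
        sum_divide_distrib[symmetric] mult_ac)
  moreover have "\<mu> * N = 1/100" using mu by simp
  moreover have "\<mu> * (2^d * N) = 2^d/100" using \<open>\<mu> * N = 1/100\<close>
    by (metis mult.left_commute times_divide_eq_right mult_1_right)
  ultimately have "\<mu>^2/2 * (\<Sum>r\<in>Sg d. (dotp d r z)^4) \<le> 2^d * (16/100000)"
    by linarith
  hence "(\<mu> * N)^2 * (\<Sum>r\<in>Sg d. (dotp d r z)^4) \<le> 2^d * (32/100000) * N^2"
    using N by (simp add: power_mult_distrib field_simps)
  hence "(1/10000) * (\<Sum>r\<in>Sg d. (dotp d r z)^4) \<le> 2^d * (32/100000) * N^2"
    using \<open>\<mu> * N = 1/100\<close> by (simp add: power2_eq_square)
  thus ?thesis using N_def by (simp add: field_simps)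
qed

lemma sum_exp_neg:
  assumes "0 < nrm d z" "0 \<le> l"
  shows "(\<Sum>r\<in>Sg d. exp (- (l * (dotp d r z)^2))) \<le> 2^d * (1 - l * nrm d z + (8/5) * (l * nrm d z)^2)"
proof -
  have "(\<Sum>r\<in>Sg d. exp (- (l * (dotp d r z)^2))) \<le> (\<Sum>r\<in>Sg d. 1 - l * (dotp d r z)^2 + (l * (dotp d r z)^2)^2/2)"
    by (intro sum_mono exp_neg_upper2) (use assms in auto)
  also have "\<dots> = 2^d - l * (2^d * nrm d z) + l^2/2 * (\<Sum>r\<in>Sg d. (dotp d r z)^4)"
    by (simp add: sum.distrib sum_subtractf sum_distrib_left[symmetric] sum_sq Sg_card power_mult_distrib
        sum_divide_distrib[symmetric] mult_ac)
  also have "\<dots> \<le> 2^d - l * (2^d * nrm d z) + l^2/2 * (2^d * (16/5) * (nrm d z)^2)"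
    by (intro add_left_mono mult_left_mono sum_4 assms) auto
  also have "\<dots> = 2^d * (1 - l * nrm d z + (8/5) * (l * nrm d z)^2)"
    by (simp add: algebra_simps power_mult_distrib)
  finally show ?thesis .
qed



definition Mt :: "nat \<Rightarrow> nat \<Rightarrow> (nat \<Rightarrow> nat \<Rightarrow> real) set" where
  "Mt k d = PiE {..<k} (\<lambda>_. Sg d)"
definition Qf :: "nat \<Rightarrow> nat \<Rightarrow> (nat \<Rightarrow> nat \<Rightarrow> real) \<Rightarrow> (nat \<Rightarrow> real) \<Rightarrow> real" where
  "Qf k d R z = (\<Sum>j<k. (dotp d (R j) z)^2)"

lemma Mt_finite[simp]: "finite (Mt k d)"
  unfolding Mt_def by (rule finite_PiE) auto

lemma Mt_card: "card (Mt k d) = (2^d)^k"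
  unfolding Mt_def by (simp add: card_PiE Sg_card)

lemma Mt_prod: fixes h :: "(nat \<Rightarrow> real) \<Rightarrow> real" shows "(\<Sum>R\<in>Mt k d. \<Prod>j<k. h (R j)) = (\<Sum>r\<in>Sg d. h r)^k"
proof -
  have "(\<Sum>R\<in>Mt k d. \<Prod>j<k. h (R j)) = (\<Prod>j<k. \<Sum>r\<in>Sg d. h r)"
    unfolding Mt_def by (rule prod_sum_PiE[where f="\<lambda>_ r. h r", symmetric]) auto
  thus ?thesis by simp
qed

lemma markov_count:
  assumes "A \<subseteq> Mt k d" "\<And>R. R \<in> A \<Longrightarrow> 1 \<le> F R" "\<And>R. 0 \<le> F R"
  shows "real (card A) \<le> (\<Sum>R\<in>Mt k d. F R)"
proof -
  have fA: "finite A" by (rule finite_subset[OF assms(1)]) simp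
  have "real (card A) = (\<Sum>R\<in>A. 1)" by simp
  also have "\<dots> \<le> (\<Sum>R\<in>A. F R)" by (rule sum_mono) (use assms(2) in auto)
  also have "\<dots> \<le> (\<Sum>R\<in>Mt k d. F R)" by (rule sum_mono2) (simp, rule assms(1), rule assms(3))
  finally show ?thesis .
qed

lemma poly_aux1:
  fixes t :: real
  assumes "0 \<le> t" "t \<le> 1/4"
  shows "1 \<le> (1 - 2*t) * (1 + (2*t + 4*t^2) + (2*t + 4*t^2)^2/2)"
proof -
  have "(1 - 2*t) * (1 + (2*t + 4*t^2) + (2*t + 4*t^2)^2/2) = 1 + t^2 * (2 - 4*t - 8*t^2 - 16*t^3)"
    by (simp add: algebra_simps power2_eq_square power3_eq_cube divide_simps)
  moreover have "4*t \<le> 1" "8*t^2 \<le> 1/2" "16*t^3 \<le> 1/4"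
  proof -
    show "4*t \<le> 1" using assms by simp
    have a: "t * t \<le> t * (1/4)" using assms by (intro mult_left_mono) auto
    thus "8*t^2 \<le> 1/2" using assms by (simp add: power2_eq_square)
    have "t * t * t \<le> t * (1/4) * t" using a assms by (intro mult_right_mono) auto
    thus "16*t^3 \<le> 1/4" using a assms by (simp add: power3_eq_cube)
  qed
  hence "0 \<le> t^2 * (2 - 4*t - 8*t^2 - 16*t^3)" by (intro mult_nonneg_nonneg) auto
  ultimately show ?thesis by simp
qed

lemma inv_sqrt_bound:
  assumes "0 \<le> t" "t \<le> 1/4"
  shows "1 / sqrt (1 - 2*t) \<le> exp (t + 2*t^2)"
proof -
  have p: "0 < 1 - 2*t" using assms by simp
  have "1 \<le> (1 - 2*t) * exp (2*t + 4*t^2)"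
  proof -
    have "0 \<le> 2*t + 4*t^2" using assms by simp
    from mult_left_mono[OF exp_lower2[OF this], of "1 - 2*t"] p
    have "(1 - 2*t) * (1 + (2*t + 4*t^2) + (2*t + 4*t^2)^2/2) \<le> (1 - 2*t) * exp (2*t + 4*t^2)" by simp
    with poly_aux1[OF assms] show ?thesis by linarith
  qed
  hence "1 / (1 - 2*t) \<le> exp (2*t + 4*t^2)" using p by (simp add: field_simps)
  hence a: "sqrt (1 / (1 - 2*t)) \<le> sqrt (exp (2*t + 4*t^2))" by (rule real_sqrt_le_mono)
  have b: "exp (2*t + 4*t^2) = (exp (t + 2*t^2))^2"
    by (simp add: exp_double[symmetric] algebra_simps)
  have c: "sqrt ((exp (t + 2*t^2))^2) = exp (t + 2*t^2)" by simp
  have d: "sqrt (1 / (1 - 2*t)) = 1 / sqrt (1 - 2*t)" by (simp add: real_sqrt_divide)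
  show ?thesis using a unfolding b c d .
qed

lemma chernoff_up:
  assumes N: "0 < nrm d z" and e: "0 < \<epsilon>" "\<epsilon> \<le> 1"
  shows "real (card {R\<in>Mt k d. (1+\<epsilon>) * k * nrm d z \<le> Qf k d R z}) \<le> real (card (Mt k d)) * exp (- k * \<epsilon>^2 / 8)"
proof -
  define l where "l = \<epsilon> / (4 * nrm d z)"
  have l: "0 \<le> l" "l * nrm d z = \<epsilon>/4" using N e by (auto simp: l_def)
  define c where "c = (1+\<epsilon>) * k * nrm d z"
  have lc: "l * c = (1+\<epsilon>) * k * (\<epsilon>/4)" unfolding c_def l(2)[symmetric] by (simp only: mult_ac)
  have "real (card {R\<in>Mt k d. c \<le> Qf k d R z}) \<le> (\<Sum>R\<in>Mt k d. exp (l * (Qf k d R z - c)))"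
    by (rule markov_count) (use l in auto)
  also have "\<dots> = (\<Sum>R\<in>Mt k d. exp (- (l * c)) * (\<Prod>j<k. exp (l * (dotp d (R j) z)^2)))"
  proof (rule sum.cong[OF refl])
    fix R
    have eq: "l * (Qf k d R z - c) = - (l * c) + (\<Sum>j<k. l * (dotp d (R j) z)^2)"
      unfolding Qf_def by (simp add: sum_distrib_left right_diff_distrib)
    have "exp (l * (Qf k d R z - c)) = exp (- (l * c) + (\<Sum>j<k. l * (dotp d (R j) z)^2))"
      by (rule arg_cong[where f=exp, OF eq])
    also have "\<dots> = exp (- (l * c)) * exp (\<Sum>j<k. l * (dotp d (R j) z)^2)" by (rule exp_add)
    also have "\<dots> = exp (- (l * c)) * (\<Prod>j<k. exp (l * (dotp d (R j) z)^2))" by (simp add: exp_sum)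
    finally show "exp (l * (Qf k d R z - c)) = exp (- (l * c)) * (\<Prod>j<k. exp (l * (dotp d (R j) z)^2))" .
  qed
  also have "\<dots> = exp (- (l * c)) * (\<Sum>R\<in>Mt k d. \<Prod>j<k. exp (l * (dotp d (R j) z)^2))"
    by (rule sum_distrib_left[symmetric])
  also have "\<dots> = exp (- (l * c)) * (\<Sum>r\<in>Sg d. exp (l * (dotp d r z)^2))^k"
    using Mt_prod[of "\<lambda>r. exp (l * (dotp d r z)^2)" k d] by (simp only:)
  also have "\<dots> \<le> exp (- (l * c)) * (2^d / sqrt (1 - 2 * l * nrm d z))^k"
  proof -
    have s: "(\<Sum>r\<in>Sg d. exp (l * (dotp d r z)^2)) \<le> 2^d / sqrt (1 - 2 * l * nrm d z)"
      by (rule sum_exp_sq) (use l e in auto)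
    have "0 \<le> (\<Sum>r\<in>Sg d. exp (l * (dotp d r z)^2))" by (simp add: sum_nonneg)
    from mult_left_mono[OF power_mono[OF s this] exp_ge_zero] show ?thesis .
  qed
  also have "2 * l * nrm d z = 2 * (\<epsilon>/4)" using l(2) by (simp only: mult.assoc)
  also have "exp (- (l * c)) * (2^d / sqrt (1 - 2 * (\<epsilon>/4)))^k = exp (- (l * c)) * (2^d)^k * (1 / sqrt (1 - 2 * (\<epsilon>/4)))^k"
    by (simp add: power_divide)
  also have "\<dots> \<le> exp (- (l * c)) * (2^d)^k * (exp (\<epsilon>/4 + 2*(\<epsilon>/4)^2))^k"
  proof -
    have s: "1 / sqrt (1 - 2 * (\<epsilon>/4)) \<le> exp (\<epsilon>/4 + 2*(\<epsilon>/4)^2)"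
      by (rule inv_sqrt_bound) (use e in auto)
    have "0 \<le> 1 / sqrt (1 - 2 * (\<epsilon>/4))" using e by simp
    from mult_left_mono[OF power_mono[OF s this], of "exp (- (l * c)) * (2^d)^k"] show ?thesis by simp
  qed
  also have "\<dots> = (2^d)^k * exp (- (l * c) + k * (\<epsilon>/4 + 2*(\<epsilon>/4)^2))"
    by (simp only: exp_add exp_of_nat_mult mult_ac)
  also have "- (l * c) + k * (\<epsilon>/4 + 2*(\<epsilon>/4)^2) = - k * \<epsilon>^2 / 8"
    unfolding lc by (simp add: algebra_simps power2_eq_square)
  finally show ?thesis unfolding c_def by (simp add: Mt_card)
qed

lemma chernoff_low:
  assumes N: "0 < nrm d z" and e: "0 < \<epsilon>" "\<epsilon> \<le> 1"
  shows "real (card {R\<in>Mt k d. Qf k d R z \<le> (1-\<epsilon>) * k * nrm d z}) \<le> real (card (Mt k d)) * exp (- k * \<epsilon>^2 / 8)"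
proof -
  define l where "l = \<epsilon> / (4 * nrm d z)"
  have l: "0 \<le> l" "l * nrm d z = \<epsilon>/4" using N e by (auto simp: l_def)
  define c where "c = (1-\<epsilon>) * k * nrm d z"
  have lc: "l * c = (1-\<epsilon>) * k * (\<epsilon>/4)" unfolding c_def l(2)[symmetric] by (simp only: mult_ac)
  have "real (card {R\<in>Mt k d. Qf k d R z \<le> c}) \<le> (\<Sum>R\<in>Mt k d. exp (l * (c - Qf k d R z)))"
    by (rule markov_count) (use l in auto)
  also have "\<dots> = (\<Sum>R\<in>Mt k d. exp (l * c) * (\<Prod>j<k. exp (- (l * (dotp d (R j) z)^2))))"
  proof (rule sum.cong[OF refl])
    fix R
    have eq: "l * (c - Qf k d R z) = l * c + (\<Sum>j<k. - (l * (dotp d (R j) z)^2))"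
      unfolding Qf_def by (simp add: sum_distrib_left right_diff_distrib sum_negf)
    have "exp (l * (c - Qf k d R z)) = exp (l * c + (\<Sum>j<k. - (l * (dotp d (R j) z)^2)))"
      by (rule arg_cong[where f=exp, OF eq])
    also have "\<dots> = exp (l * c) * exp (\<Sum>j<k. - (l * (dotp d (R j) z)^2))" by (rule exp_add)
    also have "\<dots> = exp (l * c) * (\<Prod>j<k. exp (- (l * (dotp d (R j) z)^2)))" by (simp only: exp_sum finite_lessThan)
    finally show "exp (l * (c - Qf k d R z)) = exp (l * c) * (\<Prod>j<k. exp (- (l * (dotp d (R j) z)^2)))" .
  qed
  also have "\<dots> = exp (l * c) * (\<Sum>R\<in>Mt k d. \<Prod>j<k. exp (- (l * (dotp d (R j) z)^2)))"
    by (rule sum_distrib_left[symmetric])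
  also have "\<dots> = exp (l * c) * (\<Sum>r\<in>Sg d. exp (- (l * (dotp d r z)^2)))^k"
    using Mt_prod[of "\<lambda>r. exp (- (l * (dotp d r z)^2))" k d] by (simp only:)
  also have "\<dots> \<le> exp (l * c) * (2^d * (1 - l * nrm d z + (8/5) * (l * nrm d z)^2))^k"
  proof -
    have s: "(\<Sum>r\<in>Sg d. exp (- (l * (dotp d r z)^2))) \<le> 2^d * (1 - l * nrm d z + (8/5) * (l * nrm d z)^2)"
      by (rule sum_exp_neg) (use l N in auto)
    have "0 \<le> (\<Sum>r\<in>Sg d. exp (- (l * (dotp d r z)^2)))" by (simp add: sum_nonneg)
    from mult_left_mono[OF power_mono[OF s this] exp_ge_zero] show ?thesis .
  qed
  also have "\<dots> = exp (l * c) * (2^d * (1 - (\<epsilon>/4) + (8/5) * (\<epsilon>/4)^2))^k"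
    unfolding l(2) ..
  also have "\<dots> \<le> exp (l * c) * (2^d * exp (- (\<epsilon>/4) + (8/5) * (\<epsilon>/4)^2))^k"
  proof -
    have "0 \<le> 1 - \<epsilon>/4" using e by simp
    hence a: "0 \<le> 1 - \<epsilon>/4 + (8/5) * (\<epsilon>/4)^2" by (simp add: add_nonneg_nonneg)
    have b: "1 - \<epsilon>/4 + (8/5) * (\<epsilon>/4)^2 \<le> exp (- (\<epsilon>/4) + (8/5) * (\<epsilon>/4)^2)"
      using exp_ge_add_one_self[of "- (\<epsilon>/4) + (8/5) * (\<epsilon>/4)^2"] by linarith
    have s: "2^d * (1 - \<epsilon>/4 + (8/5) * (\<epsilon>/4)^2) \<le> 2^d * exp (- (\<epsilon>/4) + (8/5) * (\<epsilon>/4)^2)"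
      by (rule mult_left_mono[OF b]) simp
    have "0 \<le> (2::real)^d * (1 - \<epsilon>/4 + (8/5) * (\<epsilon>/4)^2)" using a by simp
    from mult_left_mono[OF power_mono[OF s this] exp_ge_zero] show ?thesis by simp
  qed
  also have "\<dots> = (2^d)^k * exp (l * c + k * (- (\<epsilon>/4) + (8/5) * (\<epsilon>/4)^2))"
    by (simp only: exp_add exp_of_nat_mult power_mult_distrib mult_ac)
  also have "\<dots> \<le> (2^d)^k * exp (- k * \<epsilon>^2 / 8)"
  proof -
    have "l * c + k * (- (\<epsilon>/4) + (8/5) * (\<epsilon>/4)^2) = - k * \<epsilon>^2 * (3/20)"
      unfolding lc by (simp add: algebra_simps power2_eq_square)
    also have "\<dots> \<le> - k * \<epsilon>^2 / 8" by (simp add: mult_nonneg_nonneg)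
    finally show ?thesis by simp
  qed
  finally show ?thesis unfolding c_def by (simp add: Mt_card)
qed



lemma Qf_zero: "nrm d z = 0 \<Longrightarrow> Qf k d R z = 0"
proof -
  assume "nrm d z = 0"
  hence "\<forall>i\<in>{..<d}. (z i)^2 = 0" unfolding nrm_def
    by (subst sum_nonneg_eq_0_iff[symmetric]) auto
  hence "\<And>r. dotp d r z = 0" unfolding dotp_def by simp
  thus ?thesis unfolding Qf_def by simp
qed

definition Dv :: "(nat \<Rightarrow> nat \<Rightarrow> real) \<Rightarrow> nat \<Rightarrow> nat \<Rightarrow> nat \<Rightarrow> real" where
  "Dv f u v = (\<lambda>i. f u i - f v i)"

definition goodR :: "nat \<Rightarrow> nat \<Rightarrow> real \<Rightarrow> (nat \<Rightarrow> real) \<Rightarrow> (nat \<Rightarrow> nat \<Rightarrow> real) \<Rightarrow> bool" where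
  "goodR k d \<epsilon> z R \<longleftrightarrow> Qf k d R z \<le> (1+\<epsilon>) * k * nrm d z \<and> (1-\<epsilon>) * k * nrm d z \<le> Qf k d R z"

lemma bad_card:
  assumes e: "0 < \<epsilon>" "\<epsilon> \<le> 1"
  shows "real (card {R\<in>Mt k d. \<not> goodR k d \<epsilon> z R}) \<le> 2 * real (card (Mt k d)) * exp (- real k * \<epsilon>^2 / 8)"
proof (cases "nrm d z = 0")
  case True
  hence E: "{R\<in>Mt k d. \<not> goodR k d \<epsilon> z R} = {}" unfolding goodR_def by (auto simp: Qf_zero)
  show ?thesis unfolding E by simp
next
  case False
  hence N: "0 < nrm d z" using nrm_nonneg[of d z] by linarith
  have sub: "{R\<in>Mt k d. \<not> goodR k d \<epsilon> z R} \<subseteq> {R\<in>Mt k d. (1+\<epsilon>) * k * nrm d z \<le> Qf k d R z} \<union> {R\<in>Mt k d. Qf k d R z \<le> (1-\<epsilon>) * k * nrm d z}"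
    unfolding goodR_def by auto
  have "card {R\<in>Mt k d. \<not> goodR k d \<epsilon> z R} \<le> card ({R\<in>Mt k d. (1+\<epsilon>) * k * nrm d z \<le> Qf k d R z} \<union> {R\<in>Mt k d. Qf k d R z \<le> (1-\<epsilon>) * k * nrm d z})"
    by (rule card_mono[OF _ sub]) simp
  also have "\<dots> \<le> card {R\<in>Mt k d. (1+\<epsilon>) * k * nrm d z \<le> Qf k d R z} + card {R\<in>Mt k d. Qf k d R z \<le> (1-\<epsilon>) * k * nrm d z}"
    by (rule card_Un_le)
  finally have "real (card {R\<in>Mt k d. \<not> goodR k d \<epsilon> z R}) \<le> real (card {R\<in>Mt k d. (1+\<epsilon>) * k * nrm d z \<le> Qf k d R z}) + real (card {R\<in>Mt k d. Qf k d R z \<le> (1-\<epsilon>) * k * nrm d z})"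
    by linarith
  also have "\<dots> \<le> real (card (Mt k d)) * exp (- real k * \<epsilon>^2 / 8) + real (card (Mt k d)) * exp (- real k * \<epsilon>^2 / 8)"
    by (intro add_mono chernoff_up chernoff_low N e)
  finally show ?thesis by simp
qed

lemma exp_ln_bound:
  assumes n: "2 \<le> n" and a: "0 < \<alpha>" and k: "1000 * ln (real n) / \<alpha>^2 \<le> real k"
  shows "exp (- real k * (\<alpha>/4)^2 / 8) \<le> 1 / real n ^ 7"
proof -
  have lnpos: "0 \<le> ln (real n)" using n by simp
  have "1000 * ln (real n) \<le> real k * \<alpha>^2" using k a by (simp add: field_simps)
  hence "7 * ln (real n) \<le> k * (\<alpha>/4)^2 / 8" using lnpos by (simp add: power_divide)
  hence "exp (- real k * (\<alpha>/4)^2 / 8) \<le> exp (- (7 * ln (real n)))" by simp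
  also have "exp (- (7 * ln (real n))) = 1 / real n ^ 7"
    using n by (simp add: exp_minus exp_of_nat_mult[of 7 "ln (real n)", simplified] inverse_eq_divide)
  finally show ?thesis .
qed

lemma good_exists:
  assumes n: "2 \<le> n" and a: "0 < \<alpha>" "\<alpha> < 1" and k: "1000 * ln (real n) / \<alpha>^2 \<le> real k"
  shows "\<exists>R\<in>Mt k d. \<forall>u<n. \<forall>v<n. goodR k d (\<alpha>/4) (Dv f u v) R"
proof (rule ccontr)
  assume nt: "\<not> ?thesis"
  have cov: "Mt k d \<subseteq> (\<Union>p\<in>{..<n}\<times>{..<n}. {R\<in>Mt k d. \<not> goodR k d (\<alpha>/4) (Dv f (fst p) (snd p)) R})"
  proof
    fix R assume R: "R \<in> Mt k d"
    with nt obtain u v where uv: "u < n" "v < n" "\<not> goodR k d (\<alpha>/4) (Dv f u v) R" by blast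
    show "R \<in> (\<Union>p\<in>{..<n}\<times>{..<n}. {R\<in>Mt k d. \<not> goodR k d (\<alpha>/4) (Dv f (fst p) (snd p)) R})"
      by (rule UN_I[of "(u,v)"]) (use uv R in auto)
  qed
  define E where "E = exp (- real k * (\<alpha>/4)^2 / 8)"
  have e: "0 < \<alpha>/4" "\<alpha>/4 \<le> 1" using a by auto
  have "card (Mt k d) \<le> card (\<Union>p\<in>{..<n}\<times>{..<n}. {R\<in>Mt k d. \<not> goodR k d (\<alpha>/4) (Dv f (fst p) (snd p)) R})"
    by (rule card_mono[OF _ cov]) simp
  also have "\<dots> \<le> (\<Sum>p\<in>{..<n}\<times>{..<n}. card {R\<in>Mt k d. \<not> goodR k d (\<alpha>/4) (Dv f (fst p) (snd p)) R})"
    by (rule card_UN_le) simp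
  finally have "real (card (Mt k d)) \<le> (\<Sum>p\<in>{..<n}\<times>{..<n}. real (card {R\<in>Mt k d. \<not> goodR k d (\<alpha>/4) (Dv f (fst p) (snd p)) R}))"
    by (simp flip: of_nat_sum)
  also have "\<dots> \<le> (\<Sum>p\<in>{..<n}\<times>{..<n}. 2 * real (card (Mt k d)) * E)"
    unfolding E_def by (intro sum_mono bad_card e)
  also have "\<dots> = real n ^ 2 * (2 * real (card (Mt k d)) * E)"
    by (simp add: power2_eq_square)
  also have "\<dots> \<le> real n ^ 2 * (2 * real (card (Mt k d)) * (1 / real n ^ 7))"
    unfolding E_def by (intro mult_left_mono exp_ln_bound n k a) auto
  also have "\<dots> = real (card (Mt k d)) * (2 / real n ^ 5)"
    using n by (simp add: field_simps power_add[symmetric] eval_nat_numeral)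
  finally have A: "real (card (Mt k d)) \<le> real (card (Mt k d)) * (2 / real n ^ 5)" .
  have "(2::real)^5 \<le> real n ^ 5" using n by (intro power_mono) auto
  hence "2 < real n ^ 5" by simp
  hence B: "2 / real n ^ 5 < 1" using n by (subst pos_divide_less_eq) auto
  have C: "0 < real (card (Mt k d))" by (simp add: Mt_card)
  have "real (card (Mt k d)) * (2 / real n ^ 5) < real (card (Mt k d)) * 1"
    by (rule mult_strict_left_mono[OF B C])
  with A show False by simp
qed



lemma l2dist_nrm: "l2dist d x y = sqrt (nrm d (\<lambda>i. x i - y i))"
  unfolding l2dist_def nrm_def ..

lemma l2dist_proj:
  "l2dist k (\<lambda>j. dotp d (R j) (f u)) (\<lambda>j. dotp d (R j) (f v)) = sqrt (Qf k d R (Dv f u v))"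
proof -
  have "dotp d (R j) (f u) - dotp d (R j) (f v) = dotp d (R j) (Dv f u v)" for j
    unfolding dotp_def Dv_def by (simp add: sum_subtractf right_diff_distrib)
  thus ?thesis unfolding l2dist_def Qf_def by simp
qed

lemma poly_core:
  fixes a :: real assumes "0 < a" "a < 1"
  shows "(1 + a/2)^2 * (1 + a/4) \<le> (1 - a/4) * (1 + a)^2"
proof -
  have "(1 - a/4) * (1 + a)^2 - (1 + a/2)^2 * (1 + a/4) = a * (1/2 - 5/16 * a^2)"
    by (simp add: algebra_simps power2_eq_square)
  moreover have "a^2 \<le> 1" using assms by (simp add: power_le_one)
  hence "0 \<le> a * (1/2 - 5/16 * a^2)" using assms by (intro mult_nonneg_nonneg) auto
  ultimately show ?thesis by linarith
qed

lemma core: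
  fixes a A B QA QB :: real
  assumes a: "0 < a" "a < 1" and k: "0 < k" and AB: "0 \<le> A" "0 \<le> B" "0 \<le> QA"
    and qa: "QA \<le> (1 + a/4) * k * A" and qb: "(1 - a/4) * k * B \<le> QB"
    and h: "(1 + a) * sqrt A < sqrt B"
  shows "(1 + a/2) * sqrt QA < sqrt QB"
proof -
  have "((1 + a) * sqrt A)^2 < (sqrt B)^2"
    by (rule power_strict_mono[OF h]) (use a AB in auto)
  hence h2: "(1 + a)^2 * A < B" using AB by (simp add: power_mult_distrib)
  have p1: "0 < (1 - a/4) * k" using a k by simp
  have "(1 + a/2)^2 * QA \<le> (1 + a/2)^2 * ((1 + a/4) * k * A)"
    by (rule mult_left_mono[OF qa]) simp
  also have "\<dots> = ((1 + a/2)^2 * (1 + a/4)) * (k * A)" by (simp add: mult_ac)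
  also have "\<dots> \<le> ((1 - a/4) * (1 + a)^2) * (k * A)"
    by (rule mult_right_mono[OF poly_core[OF a]]) (use k AB in simp)
  also have "\<dots> = ((1 - a/4) * k) * ((1 + a)^2 * A)" by (simp add: mult_ac)
  also have "\<dots> < ((1 - a/4) * k) * B" by (rule mult_strict_left_mono[OF h2 p1])
  also have "\<dots> \<le> QB" using qb by (simp add: mult_ac)
  finally have "(1 + a/2)^2 * QA < QB" .
  hence "sqrt ((1 + a/2)^2 * QA) < sqrt QB" by simp
  moreover have "sqrt ((1 + a/2)^2 * QA) = (1 + a/2) * sqrt QA"
    using a by (simp add: real_sqrt_mult)
  ultimately show ?thesis by simp
qed

lemma Qf_nonneg: "0 \<le> Qf k d R z"
  unfolding Qf_def by (simp add: sum_nonneg)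

lemma transfer:
  assumes n: "2 \<le> n" and a: "0 < \<alpha>" "\<alpha> < 1" and k: "1000 * ln (real n) / \<alpha>^2 \<le> real k"
    and sh: "shattered d \<alpha> {0..<n} Q"
  shows "shattered k (\<alpha>/2) {0..<n} Q"
  unfolding shattered_def
proof (intro conjI allI)
  show QV: "Q \<subseteq> {0..<n} \<times> {0..<n} \<times> {0..<n}" using sh unfolding shattered_def by blast
  fix L :: "nat \<times> nat \<times> nat \<Rightarrow> bool"
  obtain f where f: "\<forall>q\<in>Q. satisfies d \<alpha> f q (L q)" using sh unfolding shattered_def by blast
  obtain R where R: "R \<in> Mt k d" "\<forall>u<n. \<forall>v<n. goodR k d (\<alpha>/4) (Dv f u v) R"
    using good_exists[OF n a k, of d f] by blast
  have kpos: "0 < real k"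
  proof -
    have "0 < ln (real n)" using n by simp
    hence "0 < 1000 * ln (real n) / \<alpha>^2" using a by simp
    thus ?thesis using k by linarith
  qed
  define g where "g = (\<lambda>u j. dotp d (R j) (f u))"
  have key: "(1 + \<alpha>/2) * l2dist k (g u) (g v) < l2dist k (g u) (g w)"
    if "u < n" "v < n" "w < n" "(1 + \<alpha>) * l2dist d (f u) (f v) < l2dist d (f u) (f w)" for u v w
  proof -
    have gv: "goodR k d (\<alpha>/4) (Dv f u v) R" "goodR k d (\<alpha>/4) (Dv f u w) R" using R that by auto
    have h: "(1+\<alpha>) * sqrt (nrm d (Dv f u v)) < sqrt (nrm d (Dv f u w))"
      using that(4) unfolding l2dist_nrm Dv_def .
    have qa: "Qf k d R (Dv f u v) \<le> (1 + \<alpha>/4) * real k * nrm d (Dv f u v)"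
      using gv(1) unfolding goodR_def by blast
    have qb: "(1 - \<alpha>/4) * real k * nrm d (Dv f u w) \<le> Qf k d R (Dv f u w)"
      using gv(2) unfolding goodR_def by blast
    have "(1 + \<alpha>/2) * sqrt (Qf k d R (Dv f u v)) < sqrt (Qf k d R (Dv f u w))"
      by (rule core[OF a kpos nrm_nonneg[of d "Dv f u v"] nrm_nonneg[of d "Dv f u w"] Qf_nonneg qa qb h])
    thus ?thesis unfolding g_def l2dist_proj .
  qed
  show "\<exists>g. \<forall>q\<in>Q. satisfies k (\<alpha>/2) g q (L q)"
  proof (intro exI ballI)
    fix q assume q: "q \<in> Q"
    obtain u v w where uvw: "q = (u, v, w)" by (cases q) auto
    have lt: "u < n" "v < n" "w < n" using QV q uvw by auto
    show "satisfies k (\<alpha>/2) g q (L q)"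
      using f q key[OF lt] key[OF lt(1) lt(3) lt(2)] unfolding uvw satisfies_def
      by (auto split: if_splits)
  qed
qed

lemma empty_shattered: "shattered d \<alpha> V {}"
  unfolding shattered_def by simp

lemma T_le:
  assumes "\<And>Q. shattered d \<alpha> {0..<n} Q \<Longrightarrow> shattered k \<beta> {0..<n} Q"
  shows "T n d \<alpha> \<le> T n k \<beta>"
proof -
  let ?S1 = "{card Q | Q. shattered d \<alpha> {0..<n} Q}"
  let ?S2 = "{card Q | Q. shattered k \<beta> {0..<n} Q}"
  have "?S2 \<subseteq> card ` Pow ({0..<n} \<times> {0..<n} \<times> {0..<n})"
    unfolding shattered_def by auto
  hence fin: "finite ?S2" by (rule finite_subset) simp
  have sub: "?S1 \<subseteq> ?S2" using assms by blast
  have ne: "?S1 \<noteq> {}" using empty_shattered by blast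
  show ?thesis unfolding T_def by (rule Max_mono[OF sub ne fin])
qed

lemma T_small:
  assumes "n \<le> 1" "0 < \<alpha>"
  shows "T n d \<alpha> = 0"
proof -
  have Qe: "Q = {}" if sh: "shattered d \<alpha> {0..<n} Q" for Q
  proof (rule ccontr)
    assume "Q \<noteq> {}"
    then obtain q where q: "q \<in> Q" by blast
    have QV: "Q \<subseteq> {0..<n} \<times> {0..<n} \<times> {0..<n}" using sh unfolding shattered_def by blast
    obtain f where f: "\<forall>q\<in>Q. satisfies d \<alpha> f q True"
      using sh unfolding shattered_def by (metis (full_types))
    have "q = (0, 0, 0)" using QV q assms(1) by auto
    with f q have "(1 + \<alpha>) * l2dist d (f 0) (f 0) < l2dist d (f 0) (f 0)"
      unfolding satisfies_def by auto
    moreover have "l2dist d (f 0) (f 0) = 0" unfolding l2dist_def by simp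
    ultimately show False by simp
  qed
  hence "{card Q | Q. shattered d \<alpha> {0..<n} Q} = {0}"
  proof (intro equalityI subsetI)
    fix x assume "x \<in> {card Q | Q. shattered d \<alpha> {0..<n} Q}"
    then obtain Q where Q: "x = card Q" "shattered d \<alpha> {0..<n} Q" by blast
    have "Q = {}" by (rule Qe[OF Q(2)])
    thus "x \<in> {0}" using Q(1) by simp
  next
    fix x assume "x \<in> {0::nat}"
    thus "x \<in> {card Q | Q. shattered d \<alpha> {0..<n} Q}"
      using empty_shattered[of d \<alpha> "{0..<n}"] by force
  qed
  thus ?thesis unfolding T_def by simp
qed

theorem mainTheorem11:
  fixes n d :: nat and \<alpha> :: real
  assumes "0 < \<alpha>" and "\<alpha> < 1"
  shows "T n d \<alpha> \<le> T n (nat \<lceil>1000 * ln (real n) / \<alpha>^2\<rceil>) (\<alpha> / 2)"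
proof (cases "n \<le> 1")
  case True
  thus ?thesis using T_small[OF True assms(1)] by simp
next
  case False
  hence n: "2 \<le> n" by simp
  show ?thesis
    by (rule T_le, rule transfer[OF n assms real_nat_ceiling_ge])
qed


end
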